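(* Let $f:\mathbb{R}^d\to\mathbb{R}$ be convex, twice continuously differentiable with $\nabla^2 f(x)\succ0$ for all $x$, and $L_{\text{semi}}$-semi-strongly self-concordant, and let $L_{\text{est}}\ge L_{\text{semi}}$. Then for every $x\in\mathbb{R}^d$, $$f\big(S_{f,L_{\text{est}}}(x)\big)\le\min_{y\in\mathbb{R}^d}\Big\{f(y)+\frac{L_{\text{est}}}{3}\|y-x\|_x^3\Big\}.$$
   Context: Local norms: $\|h\|_x=\langle\nabla^2 f(x)h,h\rangle^{1/2}$, $\|g\|_x^*=\langle g,[\nabla^2 f(x)]^{-1}g\rangle^{1/2}$; for a linear operator $H$ and base point $x$, $\|H\|_{op}=\sup_{v\neq0}\|Hv\|_x^*/\|v\|_x$. $f$ is $L_{\text{semi}}$-semi-strongly self-concordant if $\|\nabla^2 f(y)-\nabla^2 f(x)\|_{op}\le L_{\text{semi}}\|y-x\|_x$ for all $x,y$ (operator norm at base point $x$). $S_{f,L}(x)=x+\arg\min_{h}\{f(x)+\langle\nabla f(x),h\rangle+\frac12\langle\nabla^2f(x)h,h\rangle+\frac L6\|h\|_x^3\}$ (the minimizer exists and is unique since the objective is strictly convex and coercive). *)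

theory Defs
  imports "HOL-Analysis.Analysis"
begin

definition lnorm :: "(real^'n \<Rightarrow> real^'n^'n) \<Rightarrow> real^'n \<Rightarrow> real^'n \<Rightarrow> real" where
  "lnorm H x h = sqrt (h \<bullet> (H x *v h))"

definition dnorm :: "(real^'n \<Rightarrow> real^'n^'n) \<Rightarrow> real^'n \<Rightarrow> real^'n \<Rightarrow> real" where
  "dnorm H x g = sqrt (g \<bullet> (matrix_inv (H x) *v g))"

definition opnorm :: "(real^'n \<Rightarrow> real^'n^'n) \<Rightarrow> real^'n \<Rightarrow> real^'n^'n \<Rightarrow> real" where
  "opnorm H x A = Sup {dnorm H x (A *v v) / lnorm H x v | v. v \<noteq> 0}"

definition semi_strongly_sc :: "(real^'n \<Rightarrow> real^'n^'n) \<Rightarrow> real \<Rightarrow> bool" where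
  "semi_strongly_sc H L \<longleftrightarrow>
     (\<forall>x y. opnorm H x (H y - H x) \<le> L * lnorm H x (y - x))"

definition cubic_model ::
  "(real^'n \<Rightarrow> real) \<Rightarrow> (real^'n \<Rightarrow> real^'n) \<Rightarrow> (real^'n \<Rightarrow> real^'n^'n) \<Rightarrow> real \<Rightarrow> real^'n \<Rightarrow> real^'n \<Rightarrow> real" where
  "cubic_model f g H L x h =
     f x + g x \<bullet> h + (1/2) * (h \<bullet> (H x *v h)) + (L/6) * (lnorm H x h)^3"

definition cubic_step ::
  "(real^'n \<Rightarrow> real) \<Rightarrow> (real^'n \<Rightarrow> real^'n) \<Rightarrow> (real^'n \<Rightarrow> real^'n^'n) \<Rightarrow> real \<Rightarrow> real^'n \<Rightarrow> real^'n" where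
  "cubic_step f g H L x =
     x + (THE h. \<forall>h'. cubic_model f g H L x h \<le> cubic_model f g H L x h')"

end

theory Submission imports Defs begin

lemma qf_nonneg:
  fixes A :: "real^'n^'n"
  assumes pd: "\<And>h. h \<noteq> 0 \<Longrightarrow> h \<bullet> (A *v h) > 0"
  shows "0 \<le> h \<bullet> (A *v h)"
  using pd[of h] by (cases "h = 0") auto

lemma qf_scale:
  fixes A :: "real^'n^'n"
  shows "(t *\<^sub>R h) \<bullet> (A *v (t *\<^sub>R h)) = t^2 * (h \<bullet> (A *v h))"
  by (simp add: matrix_vector_mult_scaleR power2_eq_square)

lemma qf_add:
  fixes A :: "real^'n^'n"
  shows "(u + v) \<bullet> (A *v (u + v)) = u \<bullet> (A *v u) + v \<bullet> (A *v v) + u \<bullet> (A *v v) + v \<bullet> (A *v u)"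
  by (simp add: matrix_vector_right_distrib inner_add_left inner_add_right)

lemma qf_CS:
  fixes A :: "real^'n^'n"
  assumes sym: "\<And>u v. u \<bullet> (A *v v) = v \<bullet> (A *v u)"
    and pd: "\<And>h. h \<noteq> 0 \<Longrightarrow> h \<bullet> (A *v h) > 0"
  shows "(u \<bullet> (A *v v))^2 \<le> (u \<bullet> (A *v u)) * (v \<bullet> (A *v v))"
proof (cases "v = 0")
  case True then show ?thesis by simp
next
  case False
  define B where "B = u \<bullet> (A *v v)"
  define a where "a = u \<bullet> (A *v u)"
  define c where "c = v \<bullet> (A *v v)"
  have c: "c > 0" using pd[OF False] by (simp add: c_def)
  define t where "t = - B / c"
  have "0 \<le> (u + t *\<^sub>R v) \<bullet> (A *v (u + t *\<^sub>R v))" by (rule qf_nonneg[OF pd])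
  also have "\<dots> = a + t^2 * c + 2 * t * B"
    unfolding qf_add qf_scale
    using sym[of u "t *\<^sub>R v"] sym[of v u]
    by (simp add: a_def B_def c_def matrix_vector_mult_scaleR)
  also have "\<dots> = a - B^2 / c" using c by (simp add: t_def field_simps power2_eq_square)
  finally have "B^2 / c \<le> a" by simp
  then have "B^2 \<le> a * c" using c by (simp add: field_simps)
  then show ?thesis by (simp add: a_def B_def c_def)
qed

lemma qf_CS_abs:
  fixes A :: "real^'n^'n"
  assumes sym: "\<And>u v. u \<bullet> (A *v v) = v \<bullet> (A *v u)"
    and pd: "\<And>h. h \<noteq> 0 \<Longrightarrow> h \<bullet> (A *v h) > 0"
  shows "\<bar>u \<bullet> (A *v v)\<bar> \<le> sqrt (u \<bullet> (A *v u)) * sqrt (v \<bullet> (A *v v))"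
proof -
  have "\<bar>u \<bullet> (A *v v)\<bar> = sqrt ((u \<bullet> (A *v v))^2)" by simp
  also have "\<dots> \<le> sqrt ((u \<bullet> (A *v u)) * (v \<bullet> (A *v v)))"
    using qf_CS[OF sym pd] real_sqrt_le_mono by blast
  also have "\<dots> = sqrt (u \<bullet> (A *v u)) * sqrt (v \<bullet> (A *v v))" by (simp add: real_sqrt_mult)
  finally show ?thesis .
qed

lemma qf_inv:
  fixes A :: "real^'n^'n"
  assumes pd: "\<And>h. h \<noteq> 0 \<Longrightarrow> h \<bullet> (A *v h) > 0"
  shows "A *v (matrix_inv A *v w) = w"
proof -
  have "\<forall>x. A *v x = 0 \<longrightarrow> x = 0" using pd by force
  then have "\<exists>B. B ** A = mat 1" by (simp add: matrix_left_invertible_ker)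
  then have "invertible A" by (simp add: invertible_left_inverse)
  then have "A ** matrix_inv A = mat 1 \<and> matrix_inv A ** A = mat 1"
    unfolding invertible_def matrix_inv_def by (rule someI_ex)
  then show ?thesis by (simp add: matrix_vector_mul_assoc)
qed

lemma qf_dual:
  fixes A :: "real^'n^'n"
  assumes sym: "\<And>u v. u \<bullet> (A *v v) = v \<bullet> (A *v u)"
    and pd: "\<And>h. h \<noteq> 0 \<Longrightarrow> h \<bullet> (A *v h) > 0"
  shows "\<bar>h \<bullet> w\<bar> \<le> sqrt (w \<bullet> (matrix_inv A *v w)) * sqrt (h \<bullet> (A *v h))"
proof -
  define z where "z = matrix_inv A *v w"
  have w: "w = A *v z" using qf_inv[OF pd] by (simp add: z_def)
  have "\<bar>h \<bullet> w\<bar> \<le> sqrt (h \<bullet> (A *v h)) * sqrt (z \<bullet> (A *v z))"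
    using qf_CS_abs[OF sym pd, of h z] w by simp
  also have "z \<bullet> (A *v z) = w \<bullet> (matrix_inv A *v w)"
    using w by (simp add: z_def inner_commute)
  finally show ?thesis by (simp add: mult.commute)
qed

lemma qf_lower:
  fixes A :: "real^'n^'n"
  assumes pd: "\<And>h. h \<noteq> 0 \<Longrightarrow> h \<bullet> (A *v h) > 0"
  shows "\<exists>c>0. \<forall>v. c * (norm v)^2 \<le> v \<bullet> (A *v v)"
proof -
  have cont: "continuous_on (sphere 0 1) (\<lambda>v::real^'n. v \<bullet> (A *v v))"
    by (intro continuous_intros linear_continuous_on) (simp add: linear_conv_bounded_linear matrix_vector_mul_bounded_linear)
  have ne: "sphere (0::real^'n) 1 \<noteq> {}"
    by simp
  obtain v0 where v0: "v0 \<in> sphere 0 1" and min: "\<And>y. y \<in> sphere 0 1 \<Longrightarrow> v0 \<bullet> (A *v v0) \<le> y \<bullet> (A *v y)"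
    using continuous_attains_inf[OF compact_sphere ne cont] by blast
  have "v0 \<noteq> 0" using v0 by auto
  then have pos: "v0 \<bullet> (A *v v0) > 0" by (rule pd)
  show ?thesis
  proof (intro exI[of _ "v0 \<bullet> (A *v v0)"] conjI allI pos)
    fix v :: "real^'n"
    show "v0 \<bullet> (A *v v0) * (norm v)^2 \<le> v \<bullet> (A *v v)"
    proof (cases "v = 0")
      case True then show ?thesis by simp
    next
      case False
      have "(inverse (norm v) *\<^sub>R v) \<in> sphere 0 1" using False by simp
      then have "v0 \<bullet> (A *v v0) \<le> (inverse (norm v))^2 * (v \<bullet> (A *v v))"
        using min qf_scale by metis
      then show ?thesis using False
        by (simp add: field_simps power2_eq_square)
    qed
  qed
qed

lemma qf_upper:
  fixes B :: "real^'n^'n"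
  shows "\<exists>C. \<forall>w. sqrt (\<bar>w \<bullet> (B *v w)\<bar>) \<le> C * norm w"
proof -
  obtain K where K: "\<And>x. norm (B *v x) \<le> K * norm x"
    using linear_bounded[of "(*v) B"] matrix_vector_mul_linear by blast
  show ?thesis
  proof (intro exI allI)
    fix w :: "real^'n"
    have "\<bar>w \<bullet> (B *v w)\<bar> \<le> norm w * norm (B *v w)" by (rule Cauchy_Schwarz_ineq2)
    also have "\<dots> \<le> norm w * (K * norm w)" by (rule mult_left_mono[OF K]) simp
    also have "\<dots> \<le> \<bar>K\<bar> * (norm w)^2" 
      proof -
        have "norm w * (K * norm w) = K * (norm w)^2" by (simp add: power2_eq_square)
        also have "\<dots> \<le> \<bar>K\<bar> * (norm w)^2" by (metis abs_ge_self mult_right_mono zero_le_power2)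
        finally show ?thesis .
      qed
    also have "\<dots> = (sqrt \<bar>K\<bar> * norm w)^2" by (simp add: power_mult_distrib)
    finally have "sqrt (\<bar>w \<bullet> (B *v w)\<bar>) \<le> sqrt ((sqrt \<bar>K\<bar> * norm w)^2)"
      using real_sqrt_le_mono by blast
    then show "sqrt (\<bar>w \<bullet> (B *v w)\<bar>) \<le> sqrt \<bar>K\<bar> * norm w" by simp
  qed
qed

lemma deriv_line:
  fixes F :: "real^'n \<Rightarrow> real"
  assumes "\<And>y. (F has_derivative (\<lambda>k. G y \<bullet> k)) (at y)"
  shows "((\<lambda>t. F (p + t *\<^sub>R q)) has_real_derivative (G (p + t *\<^sub>R q) \<bullet> q)) (at t)"
proof -
  have l: "((\<lambda>t. p + t *\<^sub>R q) has_derivative (\<lambda>s. s *\<^sub>R q)) (at t)"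
    by (auto intro!: derivative_eq_intros)
  have "((\<lambda>t. F (p + t *\<^sub>R q)) has_derivative (\<lambda>s. G (p + t *\<^sub>R q) \<bullet> (s *\<^sub>R q))) (at t)"
    using has_derivative_compose[OF l assms] by simp
  then show ?thesis unfolding has_field_derivative_def
    by (rule has_derivative_eq_rhs) (auto simp: fun_eq_iff mult.commute)
qed

lemma deriv_line2:
  fixes G :: "real^'n \<Rightarrow> real^'n"
  assumes "\<And>y. (G has_derivative (\<lambda>k. H y *v k)) (at y)"
  shows "((\<lambda>t. G (p + t *\<^sub>R q) \<bullet> c) has_real_derivative ((H (p + t *\<^sub>R q) *v q) \<bullet> c)) (at t)"
proof -
  have l: "((\<lambda>t. p + t *\<^sub>R q) has_derivative (\<lambda>s. s *\<^sub>R q)) (at t)"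
    by (auto intro!: derivative_eq_intros)
  have "((\<lambda>t. G (p + t *\<^sub>R q)) has_derivative (\<lambda>s. H (p + t *\<^sub>R q) *v (s *\<^sub>R q))) (at t)"
    using has_derivative_compose[OF l assms] by simp
  then have "((\<lambda>t. G (p + t *\<^sub>R q) \<bullet> c) has_derivative (\<lambda>s. (H (p + t *\<^sub>R q) *v (s *\<^sub>R q)) \<bullet> c)) (at t)"
    by (auto intro!: derivative_eq_intros)
  then show ?thesis unfolding has_field_derivative_def
    by (rule has_derivative_eq_rhs) (auto simp: fun_eq_iff mult.commute matrix_vector_mult_scaleR)
qed

lemma bl: "bounded_linear (\<lambda>A::real^'n^'m. A *v v)"
  unfolding linear_conv_bounded_linear[symmetric]
  by (rule linearI) (auto simp: matrix_vector_mult_add_rdistrib scaleR_matrix_vector_assoc)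

lemma delta_mvt:
  fixes f :: "real^'n \<Rightarrow> real" and g :: "real^'n \<Rightarrow> real^'n" and H :: "real^'n \<Rightarrow> real^'n^'n"
  assumes grad: "\<And>x. (f has_derivative (\<lambda>h. g x \<bullet> h)) (at x)"
    and hess: "\<And>x. (g has_derivative (\<lambda>h. H x *v h)) (at x)"
    and s: "s > 0"
  shows "\<exists>\<xi>. norm (\<xi> - x) \<le> s * (norm u + norm v) \<and>
     f (x + s *\<^sub>R u + s *\<^sub>R v) - f (x + s *\<^sub>R u) - f (x + s *\<^sub>R v) + f x = s^2 * ((H \<xi> *v v) \<bullet> u)"
proof -
  define \<phi> where "\<phi> t = f (x + s *\<^sub>R v + t *\<^sub>R u) - f (x + t *\<^sub>R u)" for t
  have d\<phi>: "(\<phi> has_real_derivative (g (x + s *\<^sub>R v + t *\<^sub>R u) \<bullet> u - g (x + t *\<^sub>R u) \<bullet> u)) (at t)" for t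
    unfolding \<phi>_def by (intro DERIV_diff deriv_line grad)
  obtain \<tau> where \<tau>: "0 < \<tau>" "\<tau> < s" and e1: "\<phi> s - \<phi> 0 = (s - 0) * (g (x + s *\<^sub>R v + \<tau> *\<^sub>R u) \<bullet> u - g (x + \<tau> *\<^sub>R u) \<bullet> u)"
    using MVT2[OF s d\<phi>] by blast
  define chi where "chi r = g (x + \<tau> *\<^sub>R u + r *\<^sub>R v) \<bullet> u" for r
  have dchi: "(chi has_real_derivative ((H (x + \<tau> *\<^sub>R u + r *\<^sub>R v) *v v) \<bullet> u)) (at r)" for r
    unfolding chi_def by (intro deriv_line2 hess)
  obtain \<sigma> where \<sigma>: "0 < \<sigma>" "\<sigma> < s" and e2: "chi s - chi 0 = (s - 0) * ((H (x + \<tau> *\<^sub>R u + \<sigma> *\<^sub>R v) *v v) \<bullet> u)"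
    using MVT2[OF s dchi] by blast
  have eq1: "x + s *\<^sub>R v + \<tau> *\<^sub>R u = x + \<tau> *\<^sub>R u + s *\<^sub>R v" "x + s *\<^sub>R v + s *\<^sub>R u = x + s *\<^sub>R u + s *\<^sub>R v"
    by (simp_all add: algebra_simps)
  have A: "\<phi> s - \<phi> 0 = f (x + s *\<^sub>R u + s *\<^sub>R v) - f (x + s *\<^sub>R u) - f (x + s *\<^sub>R v) + f x"
    unfolding \<phi>_def eq1(2) by simp
  have B: "\<phi> s - \<phi> 0 = s^2 * ((H (x + \<tau> *\<^sub>R u + \<sigma> *\<^sub>R v) *v v) \<bullet> u)"
    using e1 e2 unfolding chi_def eq1(1) by (simp add: power2_eq_square)
  have E: "f (x + s *\<^sub>R u + s *\<^sub>R v) - f (x + s *\<^sub>R u) - f (x + s *\<^sub>R v) + f x = s^2 * ((H (x + \<tau> *\<^sub>R u + \<sigma> *\<^sub>R v) *v v) \<bullet> u)"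
    using A B by simp
  have "norm ((x + \<tau> *\<^sub>R u + \<sigma> *\<^sub>R v) - x) \<le> \<tau> * norm u + \<sigma> * norm v"
    using \<tau> \<sigma> norm_triangle_ineq[of "\<tau> *\<^sub>R u" "\<sigma> *\<^sub>R v"] by simp
  also have "\<dots> \<le> s * (norm u + norm v)"
    using \<tau> \<sigma> by (simp add: distrib_left add_mono mult_right_mono)
  finally show ?thesis using E by blast
qed

lemma hess_sym:
  fixes f :: "real^'n \<Rightarrow> real" and g :: "real^'n \<Rightarrow> real^'n" and H :: "real^'n \<Rightarrow> real^'n^'n"
  assumes grad: "\<And>x. (f has_derivative (\<lambda>h. g x \<bullet> h)) (at x)"
    and hess: "\<And>x. (g has_derivative (\<lambda>h. H x *v h)) (at x)"
    and hess_cont: "continuous_on UNIV H"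
  shows "u \<bullet> (H x *v v) = v \<bullet> (H x *v u)"
proof (rule ccontr)
  define k1 where "k1 y = (H y *v v) \<bullet> u" for y
  define k2 where "k2 y = (H y *v u) \<bullet> v" for y
  assume "u \<bullet> (H x *v v) \<noteq> v \<bullet> (H x *v u)"
  then have "k1 x \<noteq> k2 x" by (simp add: k1_def k2_def inner_commute)
  define e where "e = \<bar>k1 x - k2 x\<bar>"
  have e: "e > 0" using \<open>k1 x \<noteq> k2 x\<close> by (simp add: e_def)
  have c1: "isCont k1 x" unfolding k1_def using hess_cont
    by (auto intro!: continuous_intros bounded_linear.isCont[OF bl] simp: continuous_on_eq_continuous_at)
  have c2: "isCont k2 x" unfolding k2_def using hess_cont
    by (auto intro!: continuous_intros bounded_linear.isCont[OF bl] simp: continuous_on_eq_continuous_at)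
  obtain d1 where d1: "d1 > 0" "\<And>y. dist y x < d1 \<Longrightarrow> dist (k1 y) (k1 x) < e/2"
    using c1[unfolded continuous_at_eps_delta] e by (meson half_gt_zero)
  obtain d2 where d2: "d2 > 0" "\<And>y. dist y x < d2 \<Longrightarrow> dist (k2 y) (k2 x) < e/2"
    using c2[unfolded continuous_at_eps_delta] e by (meson half_gt_zero)
  define N where "N = norm u + norm v + 1"
  have N: "N > 0" "norm u + norm v < N" unfolding N_def using norm_ge_zero[of u] norm_ge_zero[of v] by linarith+
  define s where "s = min d1 d2 / N"
  have s: "s > 0" using d1 d2 N by (simp add: s_def)
  have sN: "s * (norm u + norm v) < min d1 d2"
  proof -
    have "s * (norm u + norm v) < s * N" using s N by simp
    also have "\<dots> = min d1 d2" using N by (simp add: s_def)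
    finally show ?thesis .
  qed
  obtain \<xi> where \<xi>: "norm (\<xi> - x) \<le> s * (norm u + norm v)" and E1:
     "f (x + s *\<^sub>R u + s *\<^sub>R v) - f (x + s *\<^sub>R u) - f (x + s *\<^sub>R v) + f x = s^2 * k1 \<xi>"
    using delta_mvt[OF grad hess s, of x u v] unfolding k1_def by blast
  obtain \<xi>' where \<xi>': "norm (\<xi>' - x) \<le> s * (norm v + norm u)" and E2:
     "f (x + s *\<^sub>R v + s *\<^sub>R u) - f (x + s *\<^sub>R v) - f (x + s *\<^sub>R u) + f x = s^2 * k2 \<xi>'"
    using delta_mvt[OF grad hess s, of x v u] unfolding k2_def by blast
  have eqx: "x + s *\<^sub>R v + s *\<^sub>R u = x + s *\<^sub>R u + s *\<^sub>R v" by (simp add: algebra_simps)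
  have "s^2 * k1 \<xi> = s^2 * k2 \<xi>'" using E1 E2 unfolding eqx by linarith
  then have kk: "k1 \<xi> = k2 \<xi>'" using s by simp
  have "dist \<xi> x < d1" using \<xi> sN by (simp add: dist_norm)
  then have a1: "\<bar>k1 \<xi> - k1 x\<bar> < e/2" using d1 by (simp add: dist_real_def)
  have "dist \<xi>' x < d2" using \<xi>' sN by (simp add: dist_norm add.commute)
  then have a2: "\<bar>k2 \<xi>' - k2 x\<bar> < e/2" using d2 by (simp add: dist_real_def)
  have tri: "\<And>a b c d::real. c = d \<Longrightarrow> \<bar>a-b\<bar> \<le> \<bar>c - a\<bar> + \<bar>d - b\<bar>" by arith
  have "e \<le> \<bar>k1 \<xi> - k1 x\<bar> + \<bar>k2 \<xi>' - k2 x\<bar>" unfolding e_def by (rule tri[OF kk])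
  then have "e < e" using a1 a2 by linarith
  then show False by simp
qed

lemma qf_inv_nonneg:
  fixes A :: "real^'n^'n"
  assumes pd: "\<And>h. h \<noteq> 0 \<Longrightarrow> h \<bullet> (A *v h) > 0"
  shows "0 \<le> w \<bullet> (matrix_inv A *v w)"
proof -
  define z where "z = matrix_inv A *v w"
  have w: "A *v z = w" using qf_inv[OF pd] by (simp add: z_def)
  have "w \<bullet> (matrix_inv A *v w) = z \<bullet> (A *v z)" using w by (simp add: z_def inner_commute)
  then show ?thesis using qf_nonneg[OF pd] by simp
qed

lemma lnorm_scale: "lnorm H x (t *\<^sub>R h) = \<bar>t\<bar> * lnorm H x h"
  unfolding lnorm_def qf_scale by (simp add: real_sqrt_mult)

lemma opnorm_facts:
  fixes H :: "real^'n \<Rightarrow> real^'n^'n"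
  assumes sym: "\<And>u v. u \<bullet> (H x *v v) = v \<bullet> (H x *v u)"
    and pd: "\<And>h. h \<noteq> 0 \<Longrightarrow> h \<bullet> (H x *v h) > 0"
  shows "bdd_above {dnorm H x (M *v v) / lnorm H x v | v. v \<noteq> 0}"
proof -
  obtain c where c: "c > 0" "\<And>v. c * (norm v)^2 \<le> v \<bullet> (H x *v v)"
    using qf_lower[OF pd] by blast
  obtain C where C: "\<And>w. sqrt (\<bar>w \<bullet> (matrix_inv (H x) *v w)\<bar>) \<le> C * norm w"
    using qf_upper by blast
  obtain K where K: "\<And>v. norm (M *v v) \<le> K * norm v"
    using linear_bounded[of "(*v) M"] matrix_vector_mul_linear by blast
  show ?thesis unfolding bdd_above_def
  proof (intro exI[of _ "C * K / sqrt c"] ballI, clarify)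
    fix v :: "real^'n" assume v: "v \<noteq> 0"
    have d1: "dnorm H x (M *v v) \<le> C * norm (M *v v)"
      unfolding dnorm_def using C[of "M *v v"]
      by (smt (verit, best) real_sqrt_abs2 real_sqrt_le_mono abs_ge_self real_sqrt_abs)
    have C0: "C \<ge> 0" using C[of v] v
      by (smt (verit) mult_nonneg_nonneg mult_neg_pos norm_ge_zero norm_le_zero_iff real_sqrt_ge_zero zero_less_norm_iff)
    have d2: "dnorm H x (M *v v) \<le> C * K * norm v"
      using d1 mult_left_mono[OF K[of v] C0] by (simp add: mult.assoc)
    have l: "sqrt c * norm v \<le> lnorm H x v"
    proof -
      have "sqrt c * norm v = sqrt (c * (norm v)^2)" by (simp add: real_sqrt_mult)
      also have "\<dots> \<le> lnorm H x v" unfolding lnorm_def using c(2) real_sqrt_le_mono by blast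
      finally show ?thesis .
    qed
    have pos: "sqrt c * norm v > 0" using c v by simp
    have dn0: "0 \<le> dnorm H x (M *v v)"
      unfolding dnorm_def using qf_inv_nonneg[OF pd] by simp
    have "dnorm H x (M *v v) / lnorm H x v \<le> dnorm H x (M *v v) / (sqrt c * norm v)"
      by (rule divide_left_mono[OF l dn0]) (use pos l in simp)
    also have "\<dots> \<le> C * K * norm v / (sqrt c * norm v)"
      by (rule divide_right_mono[OF d2]) (use pos in simp)
    also have "\<dots> = C * K / sqrt c" using v by simp
    finally show "dnorm H x (M *v v) / lnorm H x v \<le> C * K / sqrt c" .
  qed
qed

lemma opnorm_bound:
  fixes H :: "real^'n \<Rightarrow> real^'n^'n"
  assumes sym: "\<And>u v. u \<bullet> (H x *v v) = v \<bullet> (H x *v u)"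
    and pd: "\<And>h. h \<noteq> 0 \<Longrightarrow> h \<bullet> (H x *v h) > 0"
  shows "\<bar>h \<bullet> (M *v h)\<bar> \<le> opnorm H x M * (lnorm H x h)^2"
proof (cases "h = 0")
  case True then show ?thesis by (simp add: lnorm_def)
next
  case False
  have lpos: "lnorm H x h > 0" using pd[OF False] by (simp add: lnorm_def)
  have r: "dnorm H x (M *v h) / lnorm H x h \<le> opnorm H x M"
    unfolding opnorm_def by (rule cSup_upper) (use False opnorm_facts[where M=M and H=H and x=x, OF sym pd] in auto)
  have "\<bar>h \<bullet> (M *v h)\<bar> \<le> dnorm H x (M *v h) * lnorm H x h"
    unfolding dnorm_def lnorm_def by (rule qf_dual[OF sym pd])
  also have "\<dots> = (dnorm H x (M *v h) / lnorm H x h) * (lnorm H x h)^2"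
    using lpos by (simp add: power2_eq_square)
  also have "\<dots> \<le> opnorm H x M * (lnorm H x h)^2"
    by (rule mult_right_mono[OF r]) simp
  finally show ?thesis .
qed

lemma opnorm_nonneg:
  fixes H :: "real^'n \<Rightarrow> real^'n^'n"
  assumes sym: "\<And>u v. u \<bullet> (H x *v v) = v \<bullet> (H x *v u)"
    and pd: "\<And>h. h \<noteq> 0 \<Longrightarrow> h \<bullet> (H x *v h) > 0"
  shows "0 \<le> opnorm H x M"
proof -
  obtain v :: "real^'n" where v: "v \<noteq> 0" using axis_eq_0_iff[of "undefined::'n" "1::real"] by force
  have "dnorm H x (M *v v) / lnorm H x v \<le> opnorm H x M"
    unfolding opnorm_def by (rule cSup_upper) (use v opnorm_facts[where M=M and H=H and x=x, OF sym pd] in auto)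
  moreover have "0 \<le> dnorm H x (M *v v) / lnorm H x v"
    using qf_inv_nonneg[OF pd] qf_nonneg[OF pd] by (simp add: dnorm_def lnorm_def)
  ultimately show ?thesis by linarith
qed

lemma taylor1d:
  fixes \<psi> \<psi>1 \<psi>2 :: "real \<Rightarrow> real"
  assumes z0: "\<psi> 0 = 0" and z1: "\<psi>1 0 = 0"
    and d1: "\<And>t. (\<psi> has_real_derivative \<psi>1 t) (at t)"
    and d2: "\<And>t. (\<psi>1 has_real_derivative \<psi>2 t) (at t)"
    and b: "\<And>t. 0 \<le> t \<Longrightarrow> t \<le> 1 \<Longrightarrow> \<bar>\<psi>2 t\<bar> \<le> K * t"
  shows "\<bar>\<psi> 1\<bar> \<le> K / 6"
proof -
  have Q: "((\<lambda>r. K * r^2 / 2) has_real_derivative K * r) (at r)" for r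
    by (auto intro!: derivative_eq_intros)
  have C: "((\<lambda>r. K * r^3 / 6) has_real_derivative K * r^2 / 2) (at r)" for r
    by (auto intro!: derivative_eq_intros)
  have p1: "\<bar>\<psi>1 t\<bar> \<le> K * t^2 / 2" if t: "0 \<le> t" "t \<le> 1" for t
  proof -
    have "(\<lambda>r. K * r^2 / 2 - \<psi>1 r) 0 \<le> (\<lambda>r. K * r^2 / 2 - \<psi>1 r) t"
    proof (rule DERIV_nonneg_imp_nondecreasing[OF t(1)])
      fix r assume r: "0 \<le> r" "r \<le> t"
      show "\<exists>y. ((\<lambda>r. K * r^2 / 2 - \<psi>1 r) has_real_derivative y) (at r) \<and> 0 \<le> y"
        using DERIV_diff[OF Q d2, of r] b[of r] r t by (intro exI[of _ "K * r - \<psi>2 r"] conjI) auto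
    qed
    moreover have "(\<lambda>r. K * r^2 / 2 + \<psi>1 r) 0 \<le> (\<lambda>r. K * r^2 / 2 + \<psi>1 r) t"
    proof (rule DERIV_nonneg_imp_nondecreasing[OF t(1)])
      fix r assume r: "0 \<le> r" "r \<le> t"
      show "\<exists>y. ((\<lambda>r. K * r^2 / 2 + \<psi>1 r) has_real_derivative y) (at r) \<and> 0 \<le> y"
        using DERIV_add[OF Q d2, of r] b[of r] r t by (intro exI[of _ "K * r + \<psi>2 r"] conjI) auto
    qed
    ultimately show ?thesis using z1 by auto
  qed
  have "(\<lambda>r. K * r^3 / 6 - \<psi> r) 0 \<le> (\<lambda>r. K * r^3 / 6 - \<psi> r) 1"
  proof (rule DERIV_nonneg_imp_nondecreasing[OF zero_le_one])
    fix r :: real assume r: "0 \<le> r" "r \<le> 1"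
    show "\<exists>y. ((\<lambda>r. K * r^3 / 6 - \<psi> r) has_real_derivative y) (at r) \<and> 0 \<le> y"
      using DERIV_diff[OF C d1, of r] p1[of r] r by (intro exI[of _ "K * r^2 / 2 - \<psi>1 r"] conjI) auto
  qed
  moreover have "(\<lambda>r. K * r^3 / 6 + \<psi> r) 0 \<le> (\<lambda>r. K * r^3 / 6 + \<psi> r) 1"
  proof (rule DERIV_nonneg_imp_nondecreasing[OF zero_le_one])
    fix r :: real assume r: "0 \<le> r" "r \<le> 1"
    show "\<exists>y. ((\<lambda>r. K * r^3 / 6 + \<psi> r) has_real_derivative y) (at r) \<and> 0 \<le> y"
      using DERIV_add[OF C d1, of r] p1[of r] r by (intro exI[of _ "K * r^2 / 2 + \<psi>1 r"] conjI) auto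
  qed
  ultimately show ?thesis using z0 by auto
qed

lemma taylor_bound:
  fixes f :: "real^'n \<Rightarrow> real" and g :: "real^'n \<Rightarrow> real^'n" and H :: "real^'n \<Rightarrow> real^'n^'n"
  assumes grad: "\<And>x. (f has_derivative (\<lambda>h. g x \<bullet> h)) (at x)"
    and hess: "\<And>x. (g has_derivative (\<lambda>h. H x *v h)) (at x)"
    and sym: "\<And>u v. u \<bullet> (H x *v v) = v \<bullet> (H x *v u)"
    and pd: "\<And>h. h \<noteq> 0 \<Longrightarrow> h \<bullet> (H x *v h) > 0"
    and ssc: "semi_strongly_sc H L_semi"
    and L_ge: "L_est \<ge> L_semi"
  shows "\<bar>f (x + h) - f x - g x \<bullet> h - (1/2) * (h \<bullet> (H x *v h))\<bar> \<le> L_est / 6 * (lnorm H x h)^3"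
proof -
  define q where "q = h \<bullet> (H x *v h)"
  define \<psi> where "\<psi> t = f (x + t *\<^sub>R h) - f x - t * (g x \<bullet> h) - t^2 / 2 * q" for t
  define \<psi>1 where "\<psi>1 t = g (x + t *\<^sub>R h) \<bullet> h - g x \<bullet> h - t * q" for t
  define \<psi>2 where "\<psi>2 t = (H (x + t *\<^sub>R h) *v h) \<bullet> h - q" for t
  have d1: "(\<psi> has_real_derivative \<psi>1 t) (at t)" for t
    unfolding \<psi>_def[abs_def] \<psi>1_def
    by (rule derivative_eq_intros deriv_line[OF grad] refl | simp)+
  have d2: "(\<psi>1 has_real_derivative \<psi>2 t) (at t)" for t
    unfolding \<psi>1_def[abs_def] \<psi>2_def
    by (rule derivative_eq_intros deriv_line2[OF hess] refl | simp)+
  have b: "\<bar>\<psi>2 t\<bar> \<le> (L_est * (lnorm H x h)^3) * t" if t: "0 \<le> t" "t \<le> 1" for t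
  proof -
    define y where "y = x + t *\<^sub>R h"
    have "\<psi>2 t = h \<bullet> ((H y - H x) *v h)"
      by (simp add: \<psi>2_def q_def y_def matrix_vector_mult_diff_rdistrib inner_diff_right inner_commute)
    then have "\<bar>\<psi>2 t\<bar> \<le> opnorm H x (H y - H x) * (lnorm H x h)^2"
      using opnorm_bound[where H=H and x=x, OF sym pd] by simp
    also have "\<dots> \<le> (L_semi * lnorm H x (y - x)) * (lnorm H x h)^2"
      using ssc unfolding semi_strongly_sc_def by (intro mult_right_mono) auto
    also have "\<dots> = L_semi * (lnorm H x h)^3 * t"
      using t by (simp add: y_def lnorm_scale power2_eq_square power3_eq_cube)
    also have "\<dots> \<le> L_est * (lnorm H x h)^3 * t"
      using t L_ge qf_nonneg[OF pd, of h] by (intro mult_right_mono) (auto simp: lnorm_def)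
    finally show ?thesis .
  qed
  have "\<bar>\<psi> 1\<bar> \<le> (L_est * (lnorm H x h)^3) / 6"
    by (rule taylor1d[OF _ _ d1 d2 b]) (simp_all add: \<psi>_def \<psi>1_def)
  then show ?thesis by (simp add: \<psi>_def q_def)
qed

lemma qf_para:
  fixes A :: "real^'n^'n"
  shows "(u + v) \<bullet> (A *v (u + v)) + (u - v) \<bullet> (A *v (u - v)) = 2 * (u \<bullet> (A *v u)) + 2 * (v \<bullet> (A *v v))"
  by (simp add: matrix_vector_right_distrib vec.diff inner_add_left inner_add_right inner_diff_left inner_diff_right)

lemma lnorm_triangle:
  fixes H :: "real^'n \<Rightarrow> real^'n^'n"
  assumes sym: "\<And>u v. u \<bullet> (H x *v v) = v \<bullet> (H x *v u)"
    and pd: "\<And>h. h \<noteq> 0 \<Longrightarrow> h \<bullet> (H x *v h) > 0"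
  shows "lnorm H x (u + v) \<le> lnorm H x u + lnorm H x v"
proof -
  have B: "\<bar>u \<bullet> (H x *v v)\<bar> \<le> lnorm H x u * lnorm H x v"
    unfolding lnorm_def by (rule qf_CS_abs[OF sym pd])
  have qu: "(lnorm H x u)^2 = u \<bullet> (H x *v u)" unfolding lnorm_def using qf_nonneg[OF pd] by simp
  have qv: "(lnorm H x v)^2 = v \<bullet> (H x *v v)" unfolding lnorm_def using qf_nonneg[OF pd] by simp
  have "(u + v) \<bullet> (H x *v (u + v)) = u \<bullet> (H x *v u) + v \<bullet> (H x *v v) + 2 * (u \<bullet> (H x *v v))"
    unfolding qf_add using sym[of v u] by simp
  also have "\<dots> \<le> (lnorm H x u + lnorm H x v)^2"
    using B qu qv by (simp add: power2_eq_square algebra_simps)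
  finally have "lnorm H x (u + v) \<le> sqrt ((lnorm H x u + lnorm H x v)^2)"
    unfolding lnorm_def using real_sqrt_le_mono by blast
  also have "\<dots> = lnorm H x u + lnorm H x v" using qf_nonneg[OF pd, of u] qf_nonneg[OF pd, of v] by (simp add: lnorm_def)
  finally show ?thesis .
qed

lemma cube_convex:
  fixes a b :: real
  assumes "0 \<le> a" "0 \<le> b"
  shows "((a + b) / 2)^3 \<le> (a^3 + b^3) / 2"
proof -
  have "4 * (a^3 + b^3) - (a + b)^3 = 3 * (a + b) * (a - b)^2"
    by (simp add: power2_eq_square power3_eq_cube algebra_simps)
  moreover have "0 \<le> 3 * (a + b) * (a - b)^2" using assms by simp
  ultimately have "(a + b)^3 \<le> 4 * (a^3 + b^3)" by linarith
  then show ?thesis by (simp add: power_divide)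
qed

lemma model_unique_min:
  fixes f :: "real^'n \<Rightarrow> real" and g :: "real^'n \<Rightarrow> real^'n" and H :: "real^'n \<Rightarrow> real^'n^'n"
  assumes sym: "\<And>u v. u \<bullet> (H x *v v) = v \<bullet> (H x *v u)"
    and pd: "\<And>h. h \<noteq> 0 \<Longrightarrow> h \<bullet> (H x *v h) > 0"
    and L: "L \<ge> 0"
  shows "\<exists>!h. \<forall>h'. cubic_model f g H L x h \<le> cubic_model f g H L x h'"
proof -
  define m where "m = cubic_model f g H L x"
  have m_def': "m h = f x + g x \<bullet> h + (1/2) * (h \<bullet> (H x *v h)) + (L/6) * (lnorm H x h)^3" for h
    by (simp add: m_def cubic_model_def)
  obtain c where c: "c > 0" "\<And>v. c * (norm v)^2 \<le> v \<bullet> (H x *v v)"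
    using qf_lower[OF pd] by blast
  have cont: "continuous_on UNIV m"
    unfolding m_def cubic_model_def[abs_def] lnorm_def
    by (intro continuous_intros linear_continuous_on) (simp add: linear_conv_bounded_linear matrix_vector_mul_bounded_linear)
  define R where "R = 2 * norm (g x) / c + 1"
  have R: "R > 0" using c by (simp add: R_def add_nonneg_pos)
  obtain h0 where h0: "h0 \<in> cball 0 R" and min0: "\<And>h. h \<in> cball 0 R \<Longrightarrow> m h0 \<le> m h"
    using continuous_attains_inf[OF compact_cball _ continuous_on_subset[OF cont subset_UNIV], of 0 R] R
    by auto
  have far: "m h > f x" if h: "norm h > R" for h
  proof -
    define n where "n = norm h"
    have n: "n > 0" using R h unfolding n_def by linarith
    have "2 * norm (g x) / c < n" using h by (simp add: n_def R_def)
    then have "norm (g x) < c / 2 * n" using c by (simp add: field_simps)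
    then have a: "norm (g x) * n < c / 2 * n * n" using n by (simp add: mult_strict_right_mono)
    have b: "- (norm (g x) * n) \<le> g x \<bullet> h"
      using Cauchy_Schwarz_ineq2[of "g x" h] by (simp add: n_def)
    have q: "c * n * n \<le> h \<bullet> (H x *v h)" using c(2)[of h] by (simp add: n_def power2_eq_square)
    have l: "0 \<le> (L/6) * (lnorm H x h)^3" using L qf_nonneg[OF pd, of h] by (simp add: lnorm_def)
    show ?thesis unfolding m_def' using a b q l by linarith
  qed
  have m0: "m 0 = f x" by (simp add: m_def' lnorm_def)
  have gmin: "\<forall>h'. m h0 \<le> m h'"
  proof
    fix h'
    show "m h0 \<le> m h'"
    proof (cases "h' \<in> cball 0 R")
      case True then show ?thesis by (rule min0)
    next
      case False
      then have "m h' > f x" by (intro far) simp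
      moreover have "m h0 \<le> m 0" using min0[of 0] R by simp
      ultimately show ?thesis using m0 by simp
    qed
  qed
  have uniq: "h1 = h2" if h1: "\<forall>h'. m h1 \<le> m h'" and h2: "\<forall>h'. m h2 \<le> m h'" for h1 h2
  proof (rule ccontr)
    assume ne: "h1 \<noteq> h2"
    define mid where "mid = (1/2) *\<^sub>R (h1 + h2)"
    define q where "q h = h \<bullet> (H x *v h)" for h
    define l where "l h = lnorm H x h" for h
    have "q (h1 - h2) > 0" using pd[of "h1 - h2"] ne by (simp add: q_def)
    then have "q (h1 + h2) < 2 * q h1 + 2 * q h2" using qf_para[of h1 h2 "H x"] by (simp add: q_def)
    moreover have "q mid = q (h1 + h2) / 4" by (simp only: q_def mid_def qf_scale) (simp add: power2_eq_square)
    ultimately have qm: "q mid < (q h1 + q h2) / 2" by simp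
    have lm: "l mid \<le> (l h1 + l h2) / 2"
      using lnorm_triangle[where H=H and x=x, OF sym pd, of h1 h2]
      by (simp add: l_def mid_def lnorm_scale)
    have l0: "0 \<le> l mid" "0 \<le> l h1" "0 \<le> l h2" using qf_nonneg[OF pd] by (simp_all add: l_def lnorm_def)
    have "(l mid)^3 \<le> ((l h1 + l h2) / 2)^3" using lm l0 by (intro power_mono) auto
    also have "\<dots> \<le> ((l h1)^3 + (l h2)^3) / 2" using l0 by (intro cube_convex)
    finally have l3: "(L/6) * (l mid)^3 \<le> (L/6) * (((l h1)^3 + (l h2)^3) / 2)"
      using L by (intro mult_left_mono) auto
    have gm: "g x \<bullet> mid = (g x \<bullet> h1 + g x \<bullet> h2) / 2" by (simp add: mid_def inner_add_right)
    have A: "m mid < (m h1 + m h2) / 2"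
      unfolding m_def' using qm l3 gm unfolding q_def l_def by (simp add: field_simps)
    have B: "m h1 \<le> m mid" "m h1 = m h2" using h1 h2 by (auto intro: order_antisym)
    have "m mid < m h1" using A B(2) by simp
    then show False using B(1) by simp
  qed
  show ?thesis unfolding m_def[symmetric] using gmin uniq by blast
qed

theorem lemma5:
  fixes f :: "real^'n \<Rightarrow> real"
    and g :: "real^'n \<Rightarrow> real^'n"
    and H :: "real^'n \<Rightarrow> real^'n^'n"
    and L_semi L_est :: real
  assumes convex: "convex_on UNIV f"
    and grad: "\<And>x. (f has_derivative (\<lambda>h. g x \<bullet> h)) (at x)"
    and hess: "\<And>x. (g has_derivative (\<lambda>h. H x *v h)) (at x)"
    and hess_cont: "continuous_on UNIV H"
    and pos_def: "\<And>x h. h \<noteq> 0 \<Longrightarrow> h \<bullet> (H x *v h) > 0"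
    and ssc: "semi_strongly_sc H L_semi"
    and L_ge: "L_est \<ge> L_semi"
  shows "\<forall>x y. f (cubic_step f g H L_est x) \<le> f y + (L_est / 3) * (lnorm H x (y - x))^3"
proof (intro allI)
  fix x y :: "real^'n"
  have sym: "\<And>u v. u \<bullet> (H x *v v) = v \<bullet> (H x *v u)"
    by (rule hess_sym[OF grad hess hess_cont])
  have pd: "\<And>h. h \<noteq> 0 \<Longrightarrow> h \<bullet> (H x *v h) > 0" by (rule pos_def)
  have Lsemi: "L_semi \<ge> 0"
  proof -
    obtain v :: "real^'n" where v: "v \<noteq> 0" using axis_eq_0_iff[of "undefined::'n" "1::real"] by force
    have "opnorm H x (H (x + v) - H x) \<le> L_semi * lnorm H x (x + v - x)"
      using ssc unfolding semi_strongly_sc_def by blast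
    moreover have "0 \<le> opnorm H x (H (x + v) - H x)" by (rule opnorm_nonneg[where H=H and x=x, OF sym pd])
    moreover have "lnorm H x v > 0" using pd[OF v] by (simp add: lnorm_def)
    ultimately show ?thesis by (smt (verit) add_diff_cancel_left' mult_neg_pos)
  qed
  have L: "L_est \<ge> 0" using Lsemi L_ge by linarith
  define m where "m = cubic_model f g H L_est x"
  have m_def': "m h = f x + g x \<bullet> h + (1/2) * (h \<bullet> (H x *v h)) + (L_est/6) * (lnorm H x h)^3" for h
    by (simp add: m_def cubic_model_def)
  define hs where "hs = (THE h. \<forall>h'. m h \<le> m h')"
  have hs: "\<forall>h'. m hs \<le> m h'"
    unfolding hs_def by (rule theI') (use model_unique_min[where H=H and x=x and f=f and g=g, OF sym pd L] in \<open>simp add: m_def\<close>)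
  have step: "cubic_step f g H L_est x = x + hs"
    by (simp add: cubic_step_def hs_def m_def)
  have T1: "\<bar>f (x + hs) - f x - g x \<bullet> hs - (1/2) * (hs \<bullet> (H x *v hs))\<bar> \<le> L_est / 6 * (lnorm H x hs)^3"
    by (rule taylor_bound[OF grad hess sym pd ssc L_ge])
  have T2: "\<bar>f (x + (y - x)) - f x - g x \<bullet> (y - x) - (1/2) * ((y - x) \<bullet> (H x *v (y - x)))\<bar> \<le> L_est / 6 * (lnorm H x (y - x))^3"
    by (rule taylor_bound[OF grad hess sym pd ssc L_ge])
  have "f (x + hs) \<le> m hs" using T1 unfolding m_def' by linarith
  also have "\<dots> \<le> m (y - x)" using hs by blast
  also have "\<dots> \<le> f y + (L_est / 3) * (lnorm H x (y - x))^3" using T2[unfolded abs_le_iff] unfolding m_def' by simp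
  finally show "f (cubic_step f g H L_est x) \<le> f y + (L_est / 3) * (lnorm H x (y - x))^3"
    using step by simp
qed
end
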